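(* For $n\geq 0$ let $D_n$ denote the $1\times n$ (one row, $n$ columns) misère \textsc{Domineering} rectangle, in which Left places vertical dominoes and Right places horizontal dominoes. Write $n=6k+r$ with $k\geq 0$, $0\leq r\leq 5$. Then, in every universe $\mathcal{U}$ (i.e. with respect to $\equiv_\mathcal{U}$ for every universe $\mathcal{U}$), $D_n$ is equal to: $k\cdot(\bar{1}0)_\#$ if $r\in\{0,1\}$; $k\cdot(\bar{1}0)_\#+\bar{1}$ if $r\in\{2,3\}$; $k\cdot(\bar{1}0)_\#+\bar{1}0$ if $r=4$; $k\cdot(\bar{1}0)_\#+\bar{2}$ if $r=5$.
   Context: Games are finite partizan games; $o(G)$ is the misère outcome class (ordered $\mathscr{L}>\mathscr{N}>\mathscr{R}$, $\mathscr{L}>\mathscr{P}>\mathscr{R}$). A universe is a set of games closed under options, disjunctive sums, conjugates, and forming $\{\mathscr{G}^L\mid\mathscr{G}^R\}$ from nonempty finite subsets of it; $G\equiv_\mathcal{U}H$ means $o(G+X)=o(H+X)$ for all $X\in\mathcal{U}$. Notation: $\bar{0}=0$, $\bar{m}=\{\cdot\mid\overline{m-1}\}$ for $m\geq1$ ($\cdot$ meaning no options); $\bar{1}0=\{\cdot\mid\bar{1},0\}$; $(\bar{1}0)_\#=\{\cdot\mid\bar{1}0\}$; $k\cdot G$ is the disjunctive sum of $k$ copies of $G$. *)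

theory Defs
  imports Main "HOL-Library.Product_Lexorder"
begin

text \<open>A game is given by its list of Left options and its list of Right options
(a list representation of the finite sets of options; all notions below are
invariant under reordering/duplication).\<close>
datatype game = Game "game list" "game list"

fun leftOpts :: "game \<Rightarrow> game list" where "leftOpts (Game L R) = L"
fun rightOpts :: "game \<Rightarrow> game list" where "rightOpts (Game L R) = R"

definition zero :: game where "zero = Game [] []"

function gsum :: "game \<Rightarrow> game \<Rightarrow> game" (infixl "\<oplus>" 65) where
  "gsum (Game L R) (Game L' R') =
     Game (map (\<lambda>x. gsum x (Game L' R')) L @ map (\<lambda>y. gsum (Game L R) y) L')
          (map (\<lambda>x. gsum x (Game L' R')) R @ map (\<lambda>y. gsum (Game L R) y) R')"
  by pat_completeness auto
termination
  by (relation "measure (\<lambda>(x, y). size x + size y)")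
     (auto dest!: size_list_estimation'[where f=size, OF _ order_refl] simp: less_Suc_eq_le)

fun conjg :: "game \<Rightarrow> game" where
  "conjg (Game L R) = Game (map conjg R) (map conjg L)"

text \<open>leftFirst G: Left wins G playing first (misere: a player with no move wins).
leftSecond G: Left wins G when Right plays first.\<close>
fun leftFirst :: "game \<Rightarrow> bool" and leftSecond :: "game \<Rightarrow> bool" where
  "leftFirst (Game L R) = (L = [] \<or> (\<exists>G\<in>set L. leftSecond G))"
| "leftSecond (Game L R) = (R \<noteq> [] \<and> (\<forall>G\<in>set R. leftFirst G))"

datatype outcome = OutL | OutN | OutP | OutR

definition misere_outcome :: "game \<Rightarrow> outcome" where
  "misere_outcome G =
     (if leftFirst G then (if leftSecond G then OutL else OutN)
      else (if leftSecond G then OutP else OutR))"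

definition universe :: "game set \<Rightarrow> bool" where
  "universe U \<longleftrightarrow>
     (\<forall>G\<in>U. \<forall>H. H \<in> set (leftOpts G) \<or> H \<in> set (rightOpts G) \<longrightarrow> H \<in> U) \<and>
     (\<forall>G\<in>U. \<forall>H\<in>U. G \<oplus> H \<in> U) \<and>
     (\<forall>G\<in>U. conjg G \<in> U) \<and>
     (\<forall>L R. L \<noteq> [] \<and> R \<noteq> [] \<and> set L \<subseteq> U \<and> set R \<subseteq> U \<longrightarrow> Game L R \<in> U)"

definition equiv_univ :: "game set \<Rightarrow> game \<Rightarrow> game \<Rightarrow> bool" where
  "equiv_univ U G H \<longleftrightarrow> (\<forall>X\<in>U. misere_outcome (G \<oplus> X) = misere_outcome (H \<oplus> X))"

fun bar :: "nat \<Rightarrow> game" where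
  "bar 0 = zero"
| "bar (Suc m) = Game [] [bar m]"

definition bar1_0 :: game where "bar1_0 = Game [] [bar 1, zero]"

definition bar1_0_sharp :: game where "bar1_0_sharp = Game [] [bar1_0]"

fun gmult :: "nat \<Rightarrow> game \<Rightarrow> game" where
  "gmult 0 G = zero"
| "gmult (Suc k) G = G \<oplus> gmult k G"

text \<open>Domineering on a finite set S of empty cells (row, column).  Left places a
vertical domino covering (i,j),(i+1,j); Right places a horizontal domino covering
(i,j),(i,j+1).\<close>
function domineering :: "(nat \<times> nat) set \<Rightarrow> game" where
  "domineering S =
     (if finite S then
        Game (map (\<lambda>(i,j). domineering (S - {(i,j), (Suc i, j)}))
                 (filter (\<lambda>(i,j). (Suc i, j) \<in> S) (sorted_list_of_set S)))
             (map (\<lambda>(i,j). domineering (S - {(i,j), (i, Suc j)}))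
                 (filter (\<lambda>(i,j). (i, Suc j) \<in> S) (sorted_list_of_set S)))
      else zero)"
  by pat_completeness auto
termination
proof (relation "measure card")
  fix S :: "(nat \<times> nat) set" and x i j
  assume "finite S" "x \<in> set (filter (\<lambda>(i,j). (Suc i, j) \<in> S) (sorted_list_of_set S))" "(i,j) = x"
  then show "(S - {(i,j), (Suc i, j)}, S) \<in> measure card"
    by (auto intro!: psubset_card_mono)
next
  fix S :: "(nat \<times> nat) set" and x i j
  assume "finite S" "x \<in> set (filter (\<lambda>(i,j). (i, Suc j) \<in> S) (sorted_list_of_set S))" "(i,j) = x"
  then show "(S - {(i,j), (i, Suc j)}, S) \<in> measure card"
    by (auto intro!: psubset_card_mono)
qed auto

definition D :: "nat \<Rightarrow> game" where
  "D n = domineering {(0, j) | j. j < n}"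

end

theory Submission
  imports Defs
begin

lemma gsum_opts:
  "leftOpts (G \<oplus> H) = map (\<lambda>x. x \<oplus> H) (leftOpts G) @ map (\<lambda>y. G \<oplus> y) (leftOpts H)"
  "rightOpts (G \<oplus> H) = map (\<lambda>x. x \<oplus> H) (rightOpts G) @ map (\<lambda>y. G \<oplus> y) (rightOpts H)"
  by (cases G; cases H; simp)+

lemma game_eq: "G = Game (leftOpts G) (rightOpts G)" by (cases G) simp

lemma game_ext: "leftOpts G = leftOpts H \<Longrightarrow> rightOpts G = rightOpts H \<Longrightarrow> G = H"
  by (metis game_eq)

lemma size_opts:
  "x \<in> set (leftOpts G) \<Longrightarrow> size x < size G"
  "x \<in> set (rightOpts G) \<Longrightarrow> size x < size G"
  by (cases G; auto dest!: size_list_estimation'[where f=size, OF _ order_refl] simp: less_Suc_eq_le)+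

lemma zero_opts[simp]: "leftOpts zero = []" "rightOpts zero = []" by (simp_all add: zero_def)

lemma gsum_zero_r[simp]: "G \<oplus> zero = G"
proof (induction "size G" arbitrary: G rule: less_induct)
  case less
  show ?case
    by (rule game_ext) (auto simp: gsum_opts intro!: map_idI less dest: size_opts)
qed

lemma gsum_zero_l[simp]: "zero \<oplus> G = G"
proof (induction "size G" arbitrary: G rule: less_induct)
  case less
  show ?case
    by (rule game_ext) (auto simp: gsum_opts intro!: map_idI less dest: size_opts)
qed

lemma gsum_assoc: "(G \<oplus> H) \<oplus> K = G \<oplus> (H \<oplus> K)"
proof (induction "size G + size H + size K" arbitrary: G H K rule: less_induct)
  case less
  show ?case
    by (rule game_ext) (auto simp: gsum_opts intro!: map_cong less dest: size_opts)
qed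

lemma leftFirst_iff: "leftFirst G = (leftOpts G = [] \<or> (\<exists>x\<in>set (leftOpts G). leftSecond x))"
  by (cases G) simp
lemma leftSecond_iff: "leftSecond G = (rightOpts G \<noteq> [] \<and> (\<forall>x\<in>set (rightOpts G). leftFirst x))"
  by (cases G) simp

fun sge :: "game \<Rightarrow> game \<Rightarrow> bool" where
  "sge (Game L R) H = (L = [] \<and> leftOpts H = [] \<and> (R = [] \<longrightarrow> rightOpts H = []) \<and>
      (\<forall>g\<in>set R. \<exists>h\<in>set (rightOpts H). sge g h))"

lemma sge_iff: "sge G H = (leftOpts G = [] \<and> leftOpts H = [] \<and> (rightOpts G = [] \<longrightarrow> rightOpts H = []) \<and>
      (\<forall>g\<in>set (rightOpts G). \<exists>h\<in>set (rightOpts H). sge g h))"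
  by (cases G) simp

fun ld :: "game \<Rightarrow> bool" where
  "ld (Game L R) = (L = [] \<and> (\<forall>x\<in>set R. ld x))"

lemma ld_iff: "ld G = (leftOpts G = [] \<and> (\<forall>x\<in>set (rightOpts G). ld x))"
  by (cases G) simp

declare sge.simps[simp del] ld.simps[simp del]

lemma sound:
  "sge G H \<Longrightarrow> (leftFirst (H \<oplus> X) \<longrightarrow> leftFirst (G \<oplus> X)) \<and> (leftSecond (H \<oplus> X) \<longrightarrow> leftSecond (G \<oplus> X))"
proof (induction "size G + size X" arbitrary: G H X rule: less_induct)
  case less
  have GL: "leftOpts G = []" and HL: "leftOpts H = []" and E: "rightOpts G = [] \<longrightarrow> rightOpts H = []"
    and M: "\<forall>g\<in>set (rightOpts G). \<exists>h\<in>set (rightOpts H). sge g h"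
    using less.prems by (simp_all add: sge_iff[of G H])
  have IHl: "(leftFirst (H \<oplus> y) \<longrightarrow> leftFirst (G \<oplus> y)) \<and> (leftSecond (H \<oplus> y) \<longrightarrow> leftSecond (G \<oplus> y))"
    if "y \<in> set (leftOpts X)" for y
    using less.hyps[OF _ less.prems, of y] size_opts(1)[OF that] by simp
  have IHr: "(leftFirst (H \<oplus> y) \<longrightarrow> leftFirst (G \<oplus> y)) \<and> (leftSecond (H \<oplus> y) \<longrightarrow> leftSecond (G \<oplus> y))"
    if "y \<in> set (rightOpts X)" for y
    using less.hyps[OF _ less.prems, of y] size_opts(2)[OF that] by simp
  have IHg: "leftFirst (h \<oplus> X) \<longrightarrow> leftFirst (g \<oplus> X)" if "g \<in> set (rightOpts G)" "sge g h" for g h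
    using less.hyps[OF _ that(2), of X] size_opts(2)[OF that(1)] by simp
  show ?case
  proof (intro conjI impI)
    assume "leftFirst (H \<oplus> X)"
    then show "leftFirst (G \<oplus> X)"
      using IHl by (auto simp: leftFirst_iff gsum_opts GL HL)
  next
    assume a: "leftSecond (H \<oplus> X)"
    show "leftSecond (G \<oplus> X)"
      unfolding leftSecond_iff
    proof (intro conjI ballI)
      show "rightOpts (G \<oplus> X) \<noteq> []" using a E by (auto simp: leftSecond_iff gsum_opts)
    next
      fix x assume "x \<in> set (rightOpts (G \<oplus> X))"
      then consider (g) g where "g \<in> set (rightOpts G)" "x = g \<oplus> X"
        | (y) y where "y \<in> set (rightOpts X)" "x = G \<oplus> y"
        by (auto simp: gsum_opts)
      then show "leftFirst x"
      proof cases
        case g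
        then obtain h where "h \<in> set (rightOpts H)" "sge g h" using M by blast
        then have "leftFirst (h \<oplus> X)" using a by (auto simp: leftSecond_iff gsum_opts)
        then show ?thesis using IHg g \<open>sge g h\<close> by blast
      next
        case y
        then have "leftFirst (H \<oplus> y)" using a by (auto simp: leftSecond_iff gsum_opts)
        then show ?thesis using IHr y by blast
      qed
    qed
  qed
qed

lemma sge_equiv: assumes "sge G H" "sge H G" shows "equiv_univ U G H"
  unfolding equiv_univ_def misere_outcome_def
proof
  fix X assume "X \<in> U"
  have "leftFirst (G \<oplus> X) = leftFirst (H \<oplus> X)" "leftSecond (G \<oplus> X) = leftSecond (H \<oplus> X)"
    using sound[OF assms(1), of X] sound[OF assms(2), of X] by blast+
  then show "(if leftFirst (G \<oplus> X) then if leftSecond (G \<oplus> X) then OutL else OutN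
         else if leftSecond (G \<oplus> X) then OutP else OutR) =
        (if leftFirst (H \<oplus> X) then if leftSecond (H \<oplus> X) then OutL else OutN
         else if leftSecond (H \<oplus> X) then OutP else OutR)" by simp
qed

lemma sge_trans: "sge G H \<Longrightarrow> sge H K \<Longrightarrow> sge G K"
proof (induction "size G" arbitrary: G H K rule: less_induct)
  case less
  have G: "leftOpts G = []" "rightOpts G = [] \<longrightarrow> rightOpts H = []"
     "\<forall>g\<in>set (rightOpts G). \<exists>h\<in>set (rightOpts H). sge g h"
    using less.prems(1) by (simp_all add: sge_iff[of G H])
  have H: "leftOpts K = []" "rightOpts H = [] \<longrightarrow> rightOpts K = []"
     "\<forall>g\<in>set (rightOpts H). \<exists>h\<in>set (rightOpts K). sge g h"
    using less.prems(2) by (simp_all add: sge_iff[of H K])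
  show ?case unfolding sge_iff[of G K]
  proof (intro conjI ballI impI)
    fix g assume g: "g \<in> set (rightOpts G)"
    then obtain h where h: "h \<in> set (rightOpts H)" "sge g h" using G by blast
    then obtain k where k: "k \<in> set (rightOpts K)" "sge h k" using H by blast
    have "sge g k" using less.hyps[OF size_opts(2)[OF g] h(2) k(2)] .
    then show "\<exists>k\<in>set (rightOpts K). sge g k" using k by blast
  qed (use G H in auto)
qed

lemma sge_refl: "ld G \<Longrightarrow> sge G G"
proof (induction "size G" arbitrary: G rule: less_induct)
  case less
  have "leftOpts G = []" "\<forall>x\<in>set (rightOpts G). ld x" using less.prems ld_iff[of G] by auto
  then show ?case unfolding sge_iff[of G G] using less.hyps[OF size_opts(2)] by blast
qed

lemma sge_ld: "sge G H \<Longrightarrow> ld G"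
proof (induction "size G" arbitrary: G H rule: less_induct)
  case less
  have "leftOpts G = []" "\<forall>g\<in>set (rightOpts G). \<exists>h. sge g h" using less.prems sge_iff[of G H] by auto
  then show ?case unfolding ld_iff[of G] using less.hyps[OF size_opts(2)] by blast
qed

lemma ld_sum: "ld G \<Longrightarrow> ld K \<Longrightarrow> ld (G \<oplus> K)"
proof (induction "size G + size K" arbitrary: G K rule: less_induct)
  case less
  have G: "leftOpts G = []" "\<forall>x\<in>set (rightOpts G). ld x" using less.prems(1) ld_iff[of G] by auto
  have K: "leftOpts K = []" "\<forall>x\<in>set (rightOpts K). ld x" using less.prems(2) ld_iff[of K] by auto
  have "ld (g \<oplus> K)" if "g \<in> set (rightOpts G)" for g
    using less.hyps[of g K] size_opts(2)[OF that] G that less.prems by simp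
  moreover have "ld (G \<oplus> y)" if "y \<in> set (rightOpts K)" for y
    using less.hyps[of G y] size_opts(2)[OF that] K that less.prems by simp
  ultimately show ?case unfolding ld_iff[of "G \<oplus> K"] using G K by (auto simp: gsum_opts)
qed

lemma sge_cong: "sge G H \<Longrightarrow> sge K M \<Longrightarrow> sge (G \<oplus> K) (H \<oplus> M)"
proof (induction "size G + size K" arbitrary: G H K M rule: less_induct)
  case less
  have G: "leftOpts G = []" "leftOpts H = []" "rightOpts G = [] \<longrightarrow> rightOpts H = []"
     "\<forall>g\<in>set (rightOpts G). \<exists>h\<in>set (rightOpts H). sge g h"
    using less.prems(1) by (simp_all add: sge_iff[of G H])
  have K: "leftOpts K = []" "leftOpts M = []" "rightOpts K = [] \<longrightarrow> rightOpts M = []"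
     "\<forall>g\<in>set (rightOpts K). \<exists>h\<in>set (rightOpts M). sge g h"
    using less.prems(2) by (simp_all add: sge_iff[of K M])
  show ?case unfolding sge_iff[of "G \<oplus> K"]
  proof (intro conjI ballI impI)
    fix x assume "x \<in> set (rightOpts (G \<oplus> K))"
    then consider (g) g where "g \<in> set (rightOpts G)" "x = g \<oplus> K"
        | (y) y where "y \<in> set (rightOpts K)" "x = G \<oplus> y"
        by (auto simp: gsum_opts)
    then show "\<exists>h\<in>set (rightOpts (H \<oplus> M)). sge x h"
    proof cases
      case g
      then obtain h where "h \<in> set (rightOpts H)" "sge g h" using G by blast
      moreover have "sge (g \<oplus> K) (h \<oplus> M)"
        using less.hyps[OF _ \<open>sge g h\<close> less.prems(2)] size_opts(2)[OF g(1)] by simp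
      ultimately show ?thesis using g by (auto simp: gsum_opts)
    next
      case y
      then obtain h where "h \<in> set (rightOpts M)" "sge y h" using K by blast
      moreover have "sge (G \<oplus> y) (H \<oplus> h)"
        using less.hyps[OF _ less.prems(1) \<open>sge y h\<close>] size_opts(2)[OF y(1)] by simp
      ultimately show ?thesis using y by (auto simp: gsum_opts)
    qed
  qed (use G K in \<open>auto simp: gsum_opts\<close>)
qed

lemma sge_comm: "ld G \<Longrightarrow> ld K \<Longrightarrow> sge (G \<oplus> K) (K \<oplus> G)"
proof (induction "size G + size K" arbitrary: G K rule: less_induct)
  case less
  have G: "leftOpts G = []" "\<forall>x\<in>set (rightOpts G). ld x" using less.prems(1) ld_iff[of G] by auto
  have K: "leftOpts K = []" "\<forall>x\<in>set (rightOpts K). ld x" using less.prems(2) ld_iff[of K] by auto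
  show ?case unfolding sge_iff[of "G \<oplus> K"]
  proof (intro conjI ballI impI)
    fix x assume "x \<in> set (rightOpts (G \<oplus> K))"
    then consider (g) g where "g \<in> set (rightOpts G)" "x = g \<oplus> K"
        | (y) y where "y \<in> set (rightOpts K)" "x = G \<oplus> y"
        by (auto simp: gsum_opts)
    then show "\<exists>h\<in>set (rightOpts (K \<oplus> G)). sge x h"
    proof cases
      case g
      have "sge (g \<oplus> K) (K \<oplus> g)"
        using less.hyps[of g K] G g size_opts(2)[OF g(1)] less.prems by simp
      then show ?thesis using g by (auto simp: gsum_opts)
    next
      case y
      have "sge (G \<oplus> y) (y \<oplus> G)"
        using less.hyps[of G y] K y size_opts(2)[OF y(1)] less.prems by simp
      then show ?thesis using y by (auto simp: gsum_opts)
    qed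
  qed (use G K in \<open>auto simp: gsum_opts\<close>)
qed

definition seq :: "game \<Rightarrow> game \<Rightarrow> bool" where "seq G H \<longleftrightarrow> sge G H \<and> sge H G"

lemma seq_refl: "ld G \<Longrightarrow> seq G G" by (simp add: seq_def sge_refl)
lemma seq_sym: "seq G H \<Longrightarrow> seq H G" by (simp add: seq_def)
lemma seq_trans: "seq G H \<Longrightarrow> seq H K \<Longrightarrow> seq G K" by (meson seq_def sge_trans)
lemma seq_cong: "seq G H \<Longrightarrow> seq K M \<Longrightarrow> seq (G \<oplus> K) (H \<oplus> M)" by (simp add: seq_def sge_cong)
lemma seq_comm: "ld G \<Longrightarrow> ld K \<Longrightarrow> seq (G \<oplus> K) (K \<oplus> G)" by (simp add: seq_def sge_comm)
lemma seq_ld: "seq G H \<Longrightarrow> ld G" "seq G H \<Longrightarrow> ld H" by (auto simp: seq_def intro: sge_ld)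


definition d :: "nat set \<Rightarrow> game" where "d S = domineering ((\<lambda>j. (0::nat, j)) ` S)"

lemma dom_row:
  assumes "finite S"
  shows "leftOpts (d S) = []"
    "set (rightOpts (d S)) = (\<lambda>j. d (S - {j, Suc j})) ` {j \<in> S. Suc j \<in> S}"
proof -
  let ?P = "(\<lambda>j. (0::nat, j)) ` S"
  have fin: "finite ?P" using assms by simp
  have e: "d S = Game (map (\<lambda>(i,j). domineering (?P - {(i,j), (Suc i, j)}))
                 (filter (\<lambda>(i,j). (Suc i, j) \<in> ?P) (sorted_list_of_set ?P)))
             (map (\<lambda>(i,j). domineering (?P - {(i,j), (i, Suc j)}))
                 (filter (\<lambda>(i,j). (i, Suc j) \<in> ?P) (sorted_list_of_set ?P)))"
    unfolding d_def by (subst domineering.simps) (simp only: fin if_True)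
  have "filter (\<lambda>(i,j). (Suc i, j) \<in> ?P) (sorted_list_of_set ?P) = []"
    by (rule filter_False) (use fin in auto)
  then show "leftOpts (d S) = []" unfolding e by simp
  have "set (rightOpts (d S)) = (\<lambda>(i,j). domineering (?P - {(i,j), (i, Suc j)})) ` {x \<in> ?P. case x of (i,j) \<Rightarrow> (i, Suc j) \<in> ?P}"
    unfolding e rightOpts.simps set_map set_filter set_sorted_list_of_set[OF fin] by (rule refl)
  also have "\<dots> = (\<lambda>j. d (S - {j, Suc j})) ` {j \<in> S. Suc j \<in> S}"
  proof -
    have eq: "?P - {(0,j),(0,Suc j)} = (\<lambda>j. (0::nat, j)) ` (S - {j, Suc j})" for j by auto
    have X: "{x \<in> ?P. case x of (i,j) \<Rightarrow> (i, Suc j) \<in> ?P} = (\<lambda>j. (0::nat, j)) ` {j \<in> S. Suc j \<in> S}"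
      by (auto simp: image_iff)
    show ?thesis unfolding d_def X image_image
      by (intro image_cong refl) (simp only: eq prod.case)
  qed
  finally show "set (rightOpts (d S)) = (\<lambda>j. d (S - {j, Suc j})) ` {j \<in> S. Suc j \<in> S}" .
qed

lemma ld_d: "finite S \<Longrightarrow> ld (d S)"
proof (induction "card S" arbitrary: S rule: less_induct)
  case less
  have "ld (d (S - {j, Suc j}))" if "j \<in> S" "Suc j \<in> S" for j
  proof -
    have "card {j, Suc j} \<le> card S" by (rule card_mono) (use less.prems that in auto)
    then have "card (S - {j, Suc j}) < card S" using less.prems that by (simp add: card_Diff_subset)
    then show ?thesis using less.hyps[of "S - {j, Suc j}"] less.prems by simp
  qed
  then show ?case unfolding ld_iff[of "d S"] using dom_row[OF less.prems] by auto
qed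

lemma d_empty_opts: "finite S \<Longrightarrow> rightOpts (d S) = [] \<longleftrightarrow> (\<forall>j\<in>S. Suc j \<notin> S)"
proof -
  assume f: "finite S"
  have "rightOpts (d S) = [] \<longleftrightarrow> set (rightOpts (d S)) = {}" by simp
  also have "\<dots> \<longleftrightarrow> {j \<in> S. Suc j \<in> S} = {}" unfolding dom_row(2)[OF f] by simp
  finally show ?thesis by auto
qed


lemma d_opt_in: "finite S \<Longrightarrow> j \<in> S \<Longrightarrow> Suc j \<in> S \<Longrightarrow> d (S - {j, Suc j}) \<in> set (rightOpts (d S))"
  using dom_row(2)[of S] by auto

lemma d_opt_elim: "finite S \<Longrightarrow> x \<in> set (rightOpts (d S)) \<Longrightarrow> \<exists>j. j \<in> S \<and> Suc j \<in> S \<and> x = d (S - {j, Suc j})"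
  using dom_row(2)[of S] by auto

lemma card_less2: "finite S \<Longrightarrow> j \<in> S \<Longrightarrow> Suc j \<in> S \<Longrightarrow> card (S - {j, Suc j}) < card S"
proof -
  assume a: "finite S" "j \<in> S" "Suc j \<in> S"
  have "card {j, Suc j} \<le> card S" by (rule card_mono) (use a in auto)
  then show ?thesis using a by (simp add: card_Diff_subset)
qed

lemma sum_opt_elim: "x \<in> set (rightOpts (G \<oplus> H)) \<Longrightarrow>
   (\<exists>g\<in>set (rightOpts G). x = g \<oplus> H) \<or> (\<exists>h\<in>set (rightOpts H). x = G \<oplus> h)"
  by (auto simp: gsum_opts)

lemma d_split:
  "finite A \<Longrightarrow> finite B \<Longrightarrow> A \<inter> B = {} \<Longrightarrow> \<forall>j\<in>A. Suc j \<notin> B \<Longrightarrow> \<forall>j\<in>B. Suc j \<notin> A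
   \<Longrightarrow> seq (d (A \<union> B)) (d A \<oplus> d B)"
proof (induction "card A + card B" arbitrary: A B rule: less_induct)
  case less
  note fA = less.prems(1) and fB = less.prems(2) and dis = less.prems(3) and s1 = less.prems(4) and s2 = less.prems(5)
  have fAB: "finite (A \<union> B)" using fA fB by simp
  have IHA: "seq (d ((A - {j, Suc j}) \<union> B)) (d (A - {j, Suc j}) \<oplus> d B)" if "j \<in> A" "Suc j \<in> A" for j
    using less.hyps[of "A - {j, Suc j}" B] card_less2[OF fA that] fA fB dis s1 s2 by auto
  have IHB: "seq (d (A \<union> (B - {j, Suc j}))) (d A \<oplus> d (B - {j, Suc j}))" if "j \<in> B" "Suc j \<in> B" for j
    using less.hyps[of A "B - {j, Suc j}"] card_less2[OF fB that] fA fB dis s1 s2 by auto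
  have eA: "(A \<union> B) - {j, Suc j} = (A - {j, Suc j}) \<union> B" if "j \<in> A" "Suc j \<in> A" for j
    using that dis by auto
  have eB: "(A \<union> B) - {j, Suc j} = A \<union> (B - {j, Suc j})" if "j \<in> B" "Suc j \<in> B" for j
    using that dis by auto
  have L: "leftOpts (d (A \<union> B)) = []" "leftOpts (d A \<oplus> d B) = []"
    using dom_row(1) fA fB fAB by (auto simp: gsum_opts)
  have E: "rightOpts (d (A \<union> B)) = [] \<longleftrightarrow> rightOpts (d A \<oplus> d B) = []"
    using d_empty_opts[OF fAB] d_empty_opts[OF fA] d_empty_opts[OF fB] s1 s2
    by (auto simp: gsum_opts)
  have F: "\<exists>h\<in>set (rightOpts (d A \<oplus> d B)). sge x h" if xin: "x \<in> set (rightOpts (d (A \<union> B)))" for x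
  proof -
    obtain j where j: "j \<in> A \<union> B" "Suc j \<in> A \<union> B" "x = d ((A \<union> B) - {j, Suc j})"
      using d_opt_elim[OF fAB xin] by blast
    show ?thesis
    proof (cases "j \<in> A")
      case True
      then have "Suc j \<in> A" using j s1 by auto
      then show ?thesis using IHA[OF True] eA[OF True] j d_opt_in[OF fA True]
        by (auto simp: gsum_opts seq_def)
    next
      case False
      then have T: "j \<in> B" using j by auto
      then have "Suc j \<in> B" using j s2 by auto
      then show ?thesis using IHB[OF T] eB[OF T] j d_opt_in[OF fB T]
        by (auto simp: gsum_opts seq_def)
    qed
  qed
  have G: "\<exists>h\<in>set (rightOpts (d (A \<union> B))). sge x h" if "x \<in> set (rightOpts (d A \<oplus> d B))" for x
  proof -
    from sum_opt_elim[OF that] show ?thesis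
    proof
      assume "\<exists>g\<in>set (rightOpts (d A)). x = g \<oplus> d B"
      then obtain j where j: "j \<in> A" "Suc j \<in> A" "x = d (A - {j, Suc j}) \<oplus> d B"
        using d_opt_elim[OF fA] by blast
      have "d ((A \<union> B) - {j, Suc j}) \<in> set (rightOpts (d (A \<union> B)))"
        using d_opt_in[OF fAB] j by auto
      then show ?thesis using IHA[OF j(1,2)] eA[OF j(1,2)] j(3) by (auto simp: seq_def)
    next
      assume "\<exists>g\<in>set (rightOpts (d B)). x = d A \<oplus> g"
      then obtain j where j: "j \<in> B" "Suc j \<in> B" "x = d A \<oplus> d (B - {j, Suc j})"
        using d_opt_elim[OF fB] by blast
      have "d ((A \<union> B) - {j, Suc j}) \<in> set (rightOpts (d (A \<union> B)))"
        using d_opt_in[OF fAB] j by auto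
      then show ?thesis using IHB[OF j(1,2)] eB[OF j(1,2)] j(3) by (auto simp: seq_def)
    qed
  qed
  show ?case unfolding seq_def sge_iff[of "d (A \<union> B)"] sge_iff[of "d A \<oplus> d B"]
    using L E F G by blast
qed

lemma d_shift: "finite S \<Longrightarrow> seq (d ((+) t ` S)) (d S)"
proof (induction "card S" arbitrary: S rule: less_induct)
  case less
  note fS = less.prems
  have fT: "finite ((+) t ` S)" using fS by simp
  have IH: "seq (d ((+) t ` (S - {j, Suc j}))) (d (S - {j, Suc j}))" if "j \<in> S" "Suc j \<in> S" for j
    using less.hyps[of "S - {j, Suc j}"] card_less2[OF fS that] fS by auto
  have e: "(+) t ` S - {t + j, Suc (t + j)} = (+) t ` (S - {j, Suc j})" for j by auto
  have L: "leftOpts (d ((+) t ` S)) = []" "leftOpts (d S) = []"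
    using dom_row(1) fS fT by auto
  have E: "rightOpts (d ((+) t ` S)) = [] \<longleftrightarrow> rightOpts (d S) = []"
    using d_empty_opts[OF fS] d_empty_opts[OF fT] by auto
  have F: "\<exists>h\<in>set (rightOpts (d S)). sge x h" if xin: "x \<in> set (rightOpts (d ((+) t ` S)))" for x
  proof -
    obtain j where j: "j \<in> (+) t ` S" "Suc j \<in> (+) t ` S" "x = d ((+) t ` S - {j, Suc j})"
      using d_opt_elim[OF fT xin] by blast
    then obtain i where i: "i \<in> S" "j = t + i" by auto
    then have "Suc i \<in> S" using j by auto
    then show ?thesis using IH[OF i(1)] e[of i] i j d_opt_in[OF fS i(1)] by (auto simp: seq_def)
  qed
  have G: "\<exists>h\<in>set (rightOpts (d ((+) t ` S))). sge x h" if xin: "x \<in> set (rightOpts (d S))" for x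
  proof -
    obtain i where i: "i \<in> S" "Suc i \<in> S" "x = d (S - {i, Suc i})"
      using d_opt_elim[OF fS xin] by blast
    have "d ((+) t ` S - {t + i, Suc (t + i)}) \<in> set (rightOpts (d ((+) t ` S)))"
      using d_opt_in[OF fT, of "t + i"] i by auto
    then show ?thesis using IH[OF i(1,2)] e[of i] i by (auto simp: seq_def)
  qed
  show ?case unfolding seq_def sge_iff[of "d ((+) t ` S)"] sge_iff[of "d S"]
    using L E F G by blast
qed


definition Msh :: "nat \<Rightarrow> game" where "Msh k = gmult k bar1_0_sharp"
definition cc :: "nat \<Rightarrow> game" where
  "cc r = (if r \<le> 1 then zero else if r \<le> 3 then bar 1 else if r = 4 then bar1_0 else bar 2)"

lemma CT_all: "\<forall>r\<in>set [0..<6]. \<forall>rj\<in>set [0..<6]. \<forall>rl\<in>set [0..<6]. \<forall>e\<in>set [0..<3].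
   rj + rl + 2 = r + 6*e \<longrightarrow> (if e = 0 then (\<exists>c'\<in>set (rightOpts (cc r)). sge (cc rj \<oplus> cc rl) c')
     else sge (cc rj \<oplus> cc rl) (Msh (e-1) \<oplus> (bar1_0 \<oplus> cc r)))"
  by code_simp

lemma RT_all: "\<forall>r\<in>set [0..<6]. \<forall>c'\<in>set (rightOpts (cc r)). \<exists>a\<in>set [0..<6]. \<exists>b\<in>set [0..<6].
   a + b + 2 = r \<and> sge c' (cc a \<oplus> cc b)"
  by code_simp


lemma CT: "r < 6 \<Longrightarrow> rj < 6 \<Longrightarrow> rl < 6 \<Longrightarrow> e < 3 \<Longrightarrow> rj + rl + 2 = r + 6*e \<Longrightarrow>
   (if e = 0 then (\<exists>c'\<in>set (rightOpts (cc r)). sge (cc rj \<oplus> cc rl) c')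
     else sge (cc rj \<oplus> cc rl) (Msh (e-1) \<oplus> (bar1_0 \<oplus> cc r)))"
proof -
  assume a: "r < 6" "rj < 6" "rl < 6" "e < 3" "rj + rl + 2 = r + 6*e"
  have m: "r \<in> set [0..<6]" "rj \<in> set [0..<6]" "rl \<in> set [0..<6]" "e \<in> set [0..<3]" using a by auto
  show ?thesis using CT_all m a(5) by blast
qed

lemma RT: "r < 6 \<Longrightarrow> c' \<in> set (rightOpts (cc r)) \<Longrightarrow> \<exists>a b. a < 6 \<and> b < 6 \<and> a + b + 2 = r \<and> sge c' (cc a \<oplus> cc b)"
proof -
  assume a: "r < 6" "c' \<in> set (rightOpts (cc r))"
  have m: "r \<in> set [0..<6]" using a by auto
  obtain x y where "x \<in> set [0..<6]" "y \<in> set [0..<6]" "x + y + 2 = r \<and> sge c' (cc x \<oplus> cc y)"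
    using RT_all m a(2) by blast
  then show ?thesis by auto
qed

definition T :: "nat \<Rightarrow> game" where "T n = Msh (n div 6) \<oplus> cc (n mod 6)"

lemma ld_zero[simp]: "ld zero" by (simp add: zero_def ld.simps)
lemma ld_bar[simp]: "ld (bar m)" by (induction m) (simp_all add: ld.simps)
lemma ld_A[simp]: "ld bar1_0" by (simp add: bar1_0_def ld.simps)
lemma ld_Sh[simp]: "ld bar1_0_sharp" by (simp add: bar1_0_sharp_def ld.simps)
lemma ld_Msh[simp]: "ld (Msh k)" unfolding Msh_def by (induction k) (simp_all add: ld_sum)
lemma ld_cc[simp]: "ld (cc r)" by (simp add: cc_def ld.simps)
lemma ld_T[simp]: "ld (T n)" by (simp add: T_def ld_sum)

lemma seq_sge: "seq G H \<Longrightarrow> sge G H" "seq G H \<Longrightarrow> sge H G" by (simp_all add: seq_def)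

lemma Msh_0[simp]: "Msh 0 = zero" by (simp add: Msh_def)
lemma Msh_Suc: "Msh (Suc k) = bar1_0_sharp \<oplus> Msh k" by (simp add: Msh_def)

lemma Msh_add: "seq (Msh (p + q)) (Msh p \<oplus> Msh q)"
proof (induction p)
  case 0 then show ?case by (simp add: seq_refl)
next
  case (Suc p)
  have "seq (bar1_0_sharp \<oplus> Msh (p + q)) (bar1_0_sharp \<oplus> (Msh p \<oplus> Msh q))"
    using seq_cong[OF seq_refl[OF ld_Sh] Suc.IH] .
  then show ?case by (simp add: Msh_Suc gsum_assoc)
qed

lemma Sh_opts: "rightOpts bar1_0_sharp = [bar1_0]" "leftOpts bar1_0_sharp = []"
  by (simp_all add: bar1_0_sharp_def)

lemma Msh_opts:
  "bar1_0 \<oplus> Msh m \<in> set (rightOpts (Msh (Suc m)))"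
  "x \<in> set (rightOpts (Msh (Suc m))) \<Longrightarrow> seq x (bar1_0 \<oplus> Msh m)"
proof -
  show "bar1_0 \<oplus> Msh m \<in> set (rightOpts (Msh (Suc m)))"
    by (simp add: Msh_Suc gsum_opts Sh_opts)
  show "x \<in> set (rightOpts (Msh (Suc m))) \<Longrightarrow> seq x (bar1_0 \<oplus> Msh m)"
  proof (induction m arbitrary: x)
    case 0
    then show ?case by (simp add: Msh_Suc gsum_opts Sh_opts seq_refl ld_sum)
  next
    case (Suc m)
    from Suc.prems have "x = bar1_0 \<oplus> Msh (Suc m) \<or> (\<exists>y\<in>set (rightOpts (Msh (Suc m))). x = bar1_0_sharp \<oplus> y)"
      by (auto simp: Msh_Suc[of "Suc m"] gsum_opts Sh_opts)
    then show ?case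
    proof
      assume "x = bar1_0 \<oplus> Msh (Suc m)" then show ?thesis by (simp add: seq_refl ld_sum)
    next
      assume "\<exists>y\<in>set (rightOpts (Msh (Suc m))). x = bar1_0_sharp \<oplus> y"
      then obtain y where y: "y \<in> set (rightOpts (Msh (Suc m)))" "x = bar1_0_sharp \<oplus> y" by blast
      have "seq x (bar1_0_sharp \<oplus> (bar1_0 \<oplus> Msh m))"
        using seq_cong[OF seq_refl[OF ld_Sh] Suc.IH[OF y(1)]] y(2) by simp
      also have "bar1_0_sharp \<oplus> (bar1_0 \<oplus> Msh m) = (bar1_0_sharp \<oplus> bar1_0) \<oplus> Msh m" by (simp add: gsum_assoc)
      finally have 1: "seq x ((bar1_0_sharp \<oplus> bar1_0) \<oplus> Msh m)" .
      have "seq ((bar1_0_sharp \<oplus> bar1_0) \<oplus> Msh m) ((bar1_0 \<oplus> bar1_0_sharp) \<oplus> Msh m)"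
        by (rule seq_cong[OF seq_comm seq_refl]) simp_all
      also have "(bar1_0 \<oplus> bar1_0_sharp) \<oplus> Msh m = bar1_0 \<oplus> Msh (Suc m)" by (simp add: gsum_assoc Msh_Suc)
      finally show ?thesis using 1 seq_trans by blast
    qed
  qed
qed

lemma Msh_0_opts[simp]: "rightOpts (Msh 0) = []" by simp


lemma D_d: "D n = d {..<n}"
  unfolding D_def d_def by (rule arg_cong[where f = domineering]) auto

lemma D_opt_seq:
  assumes "Suc j < n"
  shows "seq (d ({..<n} - {j, Suc j})) (D j \<oplus> D (n - 2 - j))"
proof -
  let ?m = "n - 2 - j"
  let ?B = "(+) (j + 2) ` {..<?m}"
  have e: "{..<n} - {j, Suc j} = {..<j} \<union> ?B"
  proof (rule set_eqI)
    fix x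
    show "x \<in> {..<n} - {j, Suc j} \<longleftrightarrow> x \<in> {..<j} \<union> ?B"
    proof
      assume "x \<in> {..<n} - {j, Suc j}"
      then show "x \<in> {..<j} \<union> ?B"
        using assms by (cases "x < j") (auto simp: image_iff intro!: bexI[of _ "x - (j + 2)"])
    next
      assume "x \<in> {..<j} \<union> ?B"
      then show "x \<in> {..<n} - {j, Suc j}" using assms by auto
    qed
  qed
  have "seq (d ({..<j} \<union> ?B)) (d {..<j} \<oplus> d ?B)"
    by (rule d_split) auto
  moreover have "seq (d {..<j} \<oplus> d ?B) (d {..<j} \<oplus> d {..<?m})"
    by (rule seq_cong[OF seq_refl d_shift]) (simp_all add: ld_d)
  ultimately show ?thesis unfolding e D_d using seq_trans by blast
qed

lemma MM: "ld x \<Longrightarrow> ld y \<Longrightarrow> seq ((Msh a \<oplus> x) \<oplus> (Msh b \<oplus> y)) (Msh (a + b) \<oplus> (x \<oplus> y))"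
proof -
  assume lx: "ld x" and ly: "ld y"
  have "(Msh a \<oplus> x) \<oplus> (Msh b \<oplus> y) = Msh a \<oplus> ((x \<oplus> Msh b) \<oplus> y)" by (simp add: gsum_assoc)
  moreover have "seq (Msh a \<oplus> ((x \<oplus> Msh b) \<oplus> y)) (Msh a \<oplus> ((Msh b \<oplus> x) \<oplus> y))"
    using lx ly by (intro seq_cong seq_refl seq_comm) (simp_all)
  moreover have "Msh a \<oplus> ((Msh b \<oplus> x) \<oplus> y) = (Msh a \<oplus> Msh b) \<oplus> (x \<oplus> y)" by (simp add: gsum_assoc)
  moreover have "seq ((Msh a \<oplus> Msh b) \<oplus> (x \<oplus> y)) (Msh (a + b) \<oplus> (x \<oplus> y))"
    using lx ly by (intro seq_cong seq_refl seq_sym[OF Msh_add]) (simp add: ld_sum)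
  ultimately show ?thesis using seq_trans by metis
qed

lemma T_eq: "r < 6 \<Longrightarrow> T (6 * m + r) = Msh m \<oplus> cc r"
  by (simp add: T_def)

lemma T_opts: "set (rightOpts (T n)) = (\<lambda>x. x \<oplus> cc (n mod 6)) ` set (rightOpts (Msh (n div 6)))
    \<union> (\<lambda>y. Msh (n div 6) \<oplus> y) ` set (rightOpts (cc (n mod 6)))"
  by (simp add: T_def gsum_opts)

lemma FW:
  assumes "Suc j < n"
  shows "\<exists>h\<in>set (rightOpts (T n)). sge (T j \<oplus> T (n - 2 - j)) h"
proof -
  define l where "l = n - 2 - j"
  define k where "k = n div 6"
  define r where "r = n mod 6"
  define kj where "kj = j div 6"
  define rj where "rj = j mod 6"
  define kl where "kl = l div 6"
  define rl where "rl = l mod 6"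
  define s where "s = kj + kl"
  have n: "n = 6*k + r" "j = 6*kj + rj" "l = 6*kl + rl" "r < 6" "rj < 6" "rl < 6"
    unfolding k_def r_def kj_def rj_def kl_def rl_def by simp_all
  have sum: "j + l + 2 = n" using assms l_def by simp
  have ks: "s \<le> k" "rj + rl + 2 = r + 6*(k - s)" "k - s < 3"
    using n sum unfolding s_def by linarith+
  have TT: "seq (T j \<oplus> T l) (Msh s \<oplus> (cc rj \<oplus> cc rl))"
    unfolding T_def s_def kj_def kl_def rj_def rl_def by (rule MM) simp_all
  have TO: "set (rightOpts (T n)) = (\<lambda>x. x \<oplus> cc r) ` set (rightOpts (Msh k))
    \<union> (\<lambda>y. Msh k \<oplus> y) ` set (rightOpts (cc r))"
    unfolding k_def r_def by (rule T_opts)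
  note C = CT[OF n(4,5,6) ks(3) ks(2)]
  show ?thesis
  proof (cases "k - s = 0")
    case True
    then have ks': "k = s" using ks by simp
    from C True obtain c' where c': "c' \<in> set (rightOpts (cc r))" "sge (cc rj \<oplus> cc rl) c'" by auto
    have "sge (Msh s \<oplus> (cc rj \<oplus> cc rl)) (Msh k \<oplus> c')"
      using ks' sge_cong[OF sge_refl[OF ld_Msh] c'(2)] by simp
    then have "sge (T j \<oplus> T l) (Msh k \<oplus> c')" using TT seq_sge sge_trans by blast
    moreover have "Msh k \<oplus> c' \<in> set (rightOpts (T n))" using TO c' by auto
    ultimately show ?thesis unfolding l_def by blast
  next
    case False
    define e where "e = k - s"
    have e1: "e \<ge> 1" "k = Suc (s + (e - 1))" using False ks unfolding e_def by auto
    from C False have c: "sge (cc rj \<oplus> cc rl) (Msh (e-1) \<oplus> (bar1_0 \<oplus> cc r))" unfolding e_def by simp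
    let ?h = "(bar1_0 \<oplus> Msh (s + (e - 1))) \<oplus> cc r"
    have hin: "?h \<in> set (rightOpts (T n))"
      using TO Msh_opts(1)[of "s + (e - 1)"] e1(2) by auto
    have 1: "sge (Msh s \<oplus> (cc rj \<oplus> cc rl)) (Msh s \<oplus> (Msh (e-1) \<oplus> (bar1_0 \<oplus> cc r)))"
      by (intro sge_cong sge_refl c) simp
    have 2: "Msh s \<oplus> (Msh (e-1) \<oplus> (bar1_0 \<oplus> cc r)) = (Msh s \<oplus> Msh (e-1)) \<oplus> (bar1_0 \<oplus> cc r)"
      by (simp add: gsum_assoc)
    have 3: "sge ((Msh s \<oplus> Msh (e-1)) \<oplus> (bar1_0 \<oplus> cc r)) (Msh (s + (e - 1)) \<oplus> (bar1_0 \<oplus> cc r))"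
      by (intro sge_cong sge_refl seq_sge(2)[OF Msh_add]) (simp add: ld_sum)
    have 4: "Msh (s + (e - 1)) \<oplus> (bar1_0 \<oplus> cc r) = (Msh (s + (e - 1)) \<oplus> bar1_0) \<oplus> cc r"
      by (simp add: gsum_assoc)
    have 5: "sge ((Msh (s + (e - 1)) \<oplus> bar1_0) \<oplus> cc r) ?h"
      by (intro sge_cong sge_refl sge_comm) simp_all
    have "sge (T j \<oplus> T l) ?h"
      using TT[THEN seq_sge(1)] 1 2 3 4 5 sge_trans by metis
    then show ?thesis using hin unfolding l_def by blast
  qed
qed


lemma RV:
  assumes "h \<in> set (rightOpts (T n))"
  shows "\<exists>j. Suc j < n \<and> sge h (T j \<oplus> T (n - 2 - j))"
proof -
  define k where "k = n div 6"
  define r where "r = n mod 6"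
  have n: "n = 6*k + r" "r < 6" unfolding k_def r_def by simp_all
  have TO: "set (rightOpts (T n)) = (\<lambda>x. x \<oplus> cc r) ` set (rightOpts (Msh k))
    \<union> (\<lambda>y. Msh k \<oplus> y) ` set (rightOpts (cc r))"
    unfolding k_def r_def by (rule T_opts)
  from assms TO consider (a) x where "x \<in> set (rightOpts (Msh k))" "h = x \<oplus> cc r"
    | (b) c' where "c' \<in> set (rightOpts (cc r))" "h = Msh k \<oplus> c'" by auto
  then show ?thesis
  proof cases
    case a
    then have "k \<noteq> 0" by (cases k) auto
    then obtain m where m: "k = Suc m" by (cases k) auto
    have sx: "seq x (bar1_0 \<oplus> Msh m)" using Msh_opts(2) a(1) m by simp
    define j where "j = 6 * m + r"
    have j: "Suc j < n" "n - 2 - j = 4" using n m unfolding j_def by simp_all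
    have Tj: "T j = Msh m \<oplus> cc r" unfolding j_def using T_eq n(2) by simp
    have T4: "T 4 = bar1_0" using T_eq[of 4 0] by (simp add: cc_def)
    have 1: "sge h ((bar1_0 \<oplus> Msh m) \<oplus> cc r)"
      unfolding a(2) by (intro sge_cong sge_refl seq_sge(1)[OF sx]) simp
    have 2: "sge ((bar1_0 \<oplus> Msh m) \<oplus> cc r) ((Msh m \<oplus> bar1_0) \<oplus> cc r)"
      by (intro sge_cong sge_refl sge_comm) simp_all
    have 3: "(Msh m \<oplus> bar1_0) \<oplus> cc r = Msh m \<oplus> (bar1_0 \<oplus> cc r)" by (simp add: gsum_assoc)
    have 4: "sge (Msh m \<oplus> (bar1_0 \<oplus> cc r)) (Msh m \<oplus> (cc r \<oplus> bar1_0))"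
      by (intro sge_cong sge_refl sge_comm) simp_all
    have 5: "Msh m \<oplus> (cc r \<oplus> bar1_0) = T j \<oplus> T (n - 2 - j)"
      using Tj T4 j by (simp add: gsum_assoc)
    have "sge h (T j \<oplus> T (n - 2 - j))" using 1 2 3 4 5 sge_trans by metis
    then show ?thesis using j by blast
  next
    case b
    obtain a0 b0 where ab: "a0 < 6" "b0 < 6" "a0 + b0 + 2 = r" "sge c' (cc a0 \<oplus> cc b0)"
      using RT[OF n(2) b(1)] by blast
    define j where "j = 6 * k + a0"
    have j: "Suc j < n" "n - 2 - j = b0" using n ab unfolding j_def by simp_all
    have Tj: "T j = Msh k \<oplus> cc a0" unfolding j_def using T_eq ab by simp
    have Tb: "T b0 = cc b0" using T_eq[of b0 0] ab by simp
    have "sge h (Msh k \<oplus> (cc a0 \<oplus> cc b0))"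
      unfolding b(2) by (intro sge_cong sge_refl ab(4)) simp
    also have "Msh k \<oplus> (cc a0 \<oplus> cc b0) = T j \<oplus> T (n - 2 - j)"
      using Tj Tb j by (simp add: gsum_assoc)
    finally show ?thesis using j by blast
  qed
qed

lemma T_small: "n < 2 \<Longrightarrow> rightOpts (T n) = []"
  by (simp add: T_def cc_def gsum_opts)

lemma T_big: "2 \<le> n \<Longrightarrow> rightOpts (T n) \<noteq> []"
proof -
  assume n: "2 \<le> n"
  show ?thesis
  proof (cases "n div 6")
    case 0
    then have "n mod 6 \<ge> 2" using n by simp
    then have "rightOpts (cc (n mod 6)) \<noteq> []" by (auto simp: cc_def bar1_0_def numeral_2_eq_2)
    then show ?thesis by (simp add: T_def gsum_opts)
  next
    case (Suc m)
    then show ?thesis using Msh_opts(1)[of m] by (auto simp: T_def gsum_opts)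
  qed
qed

lemma left_T: "leftOpts (T n) = []" using ld_T ld_iff by blast

lemma main_seq: "seq (D n) (T n)"
proof (induction n rule: less_induct)
  case (less n)
  have fin: "finite {..<n}" by simp
  have LD: "leftOpts (D n) = []" unfolding D_d using dom_row(1)[OF fin] .
  have ED: "rightOpts (D n) = [] \<longleftrightarrow> n < 2"
    unfolding D_d using d_empty_opts[OF fin] by (auto dest: bspec[of _ _ 0])
  have ET: "rightOpts (T n) = [] \<longleftrightarrow> n < 2" using T_small T_big by (meson not_le)
  have OD: "\<exists>j. Suc j < n \<and> seq x (T j \<oplus> T (n - 2 - j))" if x: "x \<in> set (rightOpts (D n))" for x
  proof -
    obtain j where j: "j \<in> {..<n}" "Suc j \<in> {..<n}" "x = d ({..<n} - {j, Suc j})"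
      using d_opt_elim[OF fin] x unfolding D_d by blast
    have "seq x (D j \<oplus> D (n - 2 - j))" using D_opt_seq j by simp
    moreover have "seq (D j \<oplus> D (n - 2 - j)) (T j \<oplus> T (n - 2 - j))"
      using j by (intro seq_cong less.IH) auto
    ultimately show ?thesis using seq_trans j by auto
  qed
  have OD2: "\<exists>x\<in>set (rightOpts (D n)). seq x (T j \<oplus> T (n - 2 - j))" if j: "Suc j < n" for j
  proof -
    have xin: "d ({..<n} - {j, Suc j}) \<in> set (rightOpts (D n))"
      unfolding D_d using d_opt_in[OF fin] j by simp
    have "seq (d ({..<n} - {j, Suc j})) (D j \<oplus> D (n - 2 - j))" using D_opt_seq j by simp
    moreover have "seq (D j \<oplus> D (n - 2 - j)) (T j \<oplus> T (n - 2 - j))"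
      using j by (intro seq_cong less.IH) auto
    ultimately show ?thesis using seq_trans xin by blast
  qed
  have S1: "sge (D n) (T n)"
    unfolding sge_iff[of "D n"]
  proof (intro conjI ballI impI)
    fix x assume x: "x \<in> set (rightOpts (D n))"
    obtain j where j: "Suc j < n" "seq x (T j \<oplus> T (n - 2 - j))" using OD[OF x] by blast
    obtain h where h: "h \<in> set (rightOpts (T n))" "sge (T j \<oplus> T (n - 2 - j)) h" using FW[OF j(1)] by blast
    show "\<exists>h\<in>set (rightOpts (T n)). sge x h" using h j(2) seq_sge sge_trans by blast
  qed (use LD left_T ED ET in auto)
  have S2: "sge (T n) (D n)"
    unfolding sge_iff[of "T n"]
  proof (intro conjI ballI impI)
    fix h assume h: "h \<in> set (rightOpts (T n))"
    obtain j where j: "Suc j < n" "sge h (T j \<oplus> T (n - 2 - j))" using RV[OF h] by blast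
    obtain x where x: "x \<in> set (rightOpts (D n))" "seq x (T j \<oplus> T (n - 2 - j))" using OD2[OF j(1)] by blast
    show "\<exists>x\<in>set (rightOpts (D n)). sge h x" using x j(2) seq_sge sge_trans by blast
  qed (use LD left_T ED ET in auto)
  show ?case using S1 S2 by (simp add: seq_def)
qed

theorem mainTheorem8:
  fixes n k r :: nat and U :: "game set"
  assumes "n = 6 * k + r" and "r \<le> 5" and "universe U"
  shows "equiv_univ U (D n)
           (if r \<in> {0, 1} then gmult k bar1_0_sharp
            else if r \<in> {2, 3} then gmult k bar1_0_sharp \<oplus> bar 1
            else if r = 4 then gmult k bar1_0_sharp \<oplus> bar1_0
            else gmult k bar1_0_sharp \<oplus> bar 2)"
proof -
  have "T n = Msh k \<oplus> cc r" using assms(1,2) T_eq by simp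
  also have "\<dots> = (if r \<in> {0, 1} then gmult k bar1_0_sharp
            else if r \<in> {2, 3} then gmult k bar1_0_sharp \<oplus> bar 1
            else if r = 4 then gmult k bar1_0_sharp \<oplus> bar1_0
            else gmult k bar1_0_sharp \<oplus> bar 2)"
    using assms(2) by (auto simp: Msh_def cc_def simp del: bar.simps)
  finally have e: "T n = \<dots>" .
  show ?thesis unfolding e[symmetric]
    using main_seq[of n] sge_equiv unfolding seq_def by blast
qed

end
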